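(* Let $G$ be a directed acyclic graph with edge partition into pages including three pages $\mathtt{Red}$, $\mathtt{Blue}$, $\mathtt{Green}$, and let $\pi$ be a valid ordering of $(G,P)$. Suppose $G$ contains distinct vertices $l,\alpha,\omega,a',b',c',h,a'',b'',c''$ and the edges $(l,\alpha),(l,\omega)\in\mathtt{Red}$; $(\alpha,a'),(\alpha,b'),(\omega,b'),(\omega,c')\in\mathtt{Blue}$; $(a',h),(b',h),(c',h)\in\mathtt{Green}$; and $(a',a''),(b',b''),(c',c'')\in\mathtt{Red}$. If $\pi(h)<\min(\pi(a''),\pi(b''),\pi(c''))$, then either $\pi(a'')<\pi(b'')<\pi(c'')$ or $\pi(c'')<\pi(b'')<\pi(a'')$.
   Context: For a DAG $G$ with a partition $P$ of its edges into pages, a valid ordering is a linear ordering $\pi$ of the vertices that is a topological order ($\pi(u)<\pi(v)$ for each edge $(u,v)$) and such that no two edges in the same page cross; edges with endpoints $p_1,q_1$ and $p_2,q_2$ (with $\pi(p_t)<\pi(q_t)$, all four distinct) cross iff $\pi(p_1)<\pi(p_2)<\pi(q_1)<\pi(q_2)$ or $\pi(p_2)<\pi(p_1)<\pi(q_2)<\pi(q_1)$. *)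

theory Defs
  imports Main
begin

definition dag :: "'v set \<Rightarrow> ('v \<times> 'v) set \<Rightarrow> bool" where
  "dag V E \<longleftrightarrow> finite V \<and> E \<subseteq> V \<times> V \<and> acyclic E"

definition edge_partition :: "('v \<times> 'v) set \<Rightarrow> ('v \<times> 'v) set set \<Rightarrow> bool" where
  "edge_partition E P \<longleftrightarrow> \<Union>P = E \<and> {} \<notin> P \<and> (\<forall>A\<in>P. \<forall>B\<in>P. A \<noteq> B \<longrightarrow> A \<inter> B = {})"

definition cross :: "('v \<Rightarrow> nat) \<Rightarrow> 'v \<times> 'v \<Rightarrow> 'v \<times> 'v \<Rightarrow> bool" where
  "cross \<pi> e1 e2 \<longleftrightarrow> (case e1 of (p1, q1) \<Rightarrow> case e2 of (p2, q2) \<Rightarrow>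
     distinct [p1, q1, p2, q2] \<and>
     ((\<pi> p1 < \<pi> p2 \<and> \<pi> p2 < \<pi> q1 \<and> \<pi> q1 < \<pi> q2) \<or>
      (\<pi> p2 < \<pi> p1 \<and> \<pi> p1 < \<pi> q2 \<and> \<pi> q2 < \<pi> q1)))"

definition valid_ordering :: "'v set \<Rightarrow> ('v \<times> 'v) set \<Rightarrow> ('v \<times> 'v) set set \<Rightarrow> ('v \<Rightarrow> nat) \<Rightarrow> bool" where
  "valid_ordering V E P \<pi> \<longleftrightarrow>
     inj_on \<pi> V \<and>
     (\<forall>(u, v)\<in>E. \<pi> u < \<pi> v) \<and>
     (\<forall>A\<in>P. \<forall>e1\<in>A. \<forall>e2\<in>A. \<not> cross \<pi> e1 e2)"

end

theory Submission
  imports Defs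
begin

lemma nc_iff:
  assumes "distinct [p1, q1, p2, q2]" "\<not> cross \<pi> (p1, q1) (p2, q2)"
  shows "\<not> (\<pi> p1 < \<pi> p2 \<and> \<pi> p2 < \<pi> q1 \<and> \<pi> q1 < \<pi> q2) \<and>
         \<not> (\<pi> p2 < \<pi> p1 \<and> \<pi> p1 < \<pi> q2 \<and> \<pi> q2 < \<pi> q1)"
  using assms unfolding cross_def by auto

theorem lemma1:
  fixes V :: "'v set" and E :: "'v rel" and P :: "('v \<times> 'v) set set"
    and Red Blue Green :: "('v \<times> 'v) set" and \<pi> :: "'v \<Rightarrow> nat"
    and l \<alpha> \<omega> a' b' c' h a'' b'' c'' :: 'v
  assumes "dag V E"
    and "edge_partition E P"
    and "Red \<in> P" and "Blue \<in> P" and "Green \<in> P"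
    and "Red \<noteq> Blue" and "Red \<noteq> Green" and "Blue \<noteq> Green"
    and "valid_ordering V E P \<pi>"
    and "distinct [l, \<alpha>, \<omega>, a', b', c', h, a'', b'', c'']"
    and "(l, \<alpha>) \<in> Red" and "(l, \<omega>) \<in> Red"
    and "(\<alpha>, a') \<in> Blue" and "(\<alpha>, b') \<in> Blue" and "(\<omega>, b') \<in> Blue" and "(\<omega>, c') \<in> Blue"
    and "(a', h) \<in> Green" and "(b', h) \<in> Green" and "(c', h) \<in> Green"
    and "(a', a'') \<in> Red" and "(b', b'') \<in> Red" and "(c', c'') \<in> Red"
    and "\<pi> h < min (\<pi> a'') (min (\<pi> b'') (\<pi> c''))"
  shows "(\<pi> a'' < \<pi> b'' \<and> \<pi> b'' < \<pi> c'') \<or> (\<pi> c'' < \<pi> b'' \<and> \<pi> b'' < \<pi> a'')"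
proof -
  note A = assms
  have RE: "Red \<subseteq> E" "Blue \<subseteq> E" "Green \<subseteq> E" using A(2-5) unfolding edge_partition_def by auto
  have EV: "E \<subseteq> V \<times> V" using A(1) unfolding dag_def by auto
  have vo: "inj_on \<pi> V" "\<forall>(u, v)\<in>E. \<pi> u < \<pi> v" "\<forall>A\<in>P. \<forall>e1\<in>A. \<forall>e2\<in>A. \<not> cross \<pi> e1 e2"
    using A(9) unfolding valid_ordering_def by auto
  have inE: "(l, \<alpha>) \<in> E" "(l, \<omega>) \<in> E" "(\<alpha>, a') \<in> E" "(\<alpha>, b') \<in> E" "(\<omega>, b') \<in> E" "(\<omega>, c') \<in> E"
    "(a', h) \<in> E" "(b', h) \<in> E" "(c', h) \<in> E" "(a', a'') \<in> E" "(b', b'') \<in> E" "(c', c'') \<in> E"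
    using A(11-22) RE by auto
  have inV: "l \<in> V" "\<alpha> \<in> V" "\<omega> \<in> V" "a' \<in> V" "b' \<in> V" "c' \<in> V" "h \<in> V" "a'' \<in> V" "b'' \<in> V" "c'' \<in> V"
    using inE EV by auto
  have ne: "\<pi> x \<noteq> \<pi> y" if "x \<in> V" "y \<in> V" "x \<noteq> y" for x y
    using vo(1) that by (meson inj_onD)
  have D: "\<pi> a' \<noteq> \<pi> b'" "\<pi> a' \<noteq> \<pi> c'" "\<pi> b' \<noteq> \<pi> c'" "\<pi> a' \<noteq> \<pi> \<omega>" "\<pi> c' \<noteq> \<pi> \<alpha>" "\<pi> \<alpha> \<noteq> \<pi> \<omega>"
    "\<pi> b'' \<noteq> \<pi> a''" "\<pi> b'' \<noteq> \<pi> c''" "\<pi> a'' \<noteq> \<pi> c''" "\<pi> b' \<noteq> \<pi> \<alpha>" "\<pi> b' \<noteq> \<pi> \<omega>"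
    using ne inV A(10) by auto
  have T: "\<pi> l < \<pi> \<alpha>" "\<pi> l < \<pi> \<omega>" "\<pi> \<alpha> < \<pi> a'" "\<pi> \<alpha> < \<pi> b'" "\<pi> \<omega> < \<pi> b'" "\<pi> \<omega> < \<pi> c'"
    "\<pi> a' < \<pi> h" "\<pi> b' < \<pi> h" "\<pi> c' < \<pi> h"
    using vo(2) inE by auto
  have nc: "\<not> cross \<pi> e1 e2" if "e1 \<in> X" "e2 \<in> X" "X \<in> P" for e1 e2 X
    using vo(3) that by blast
  have R1: "\<not> cross \<pi> (a', a'') (b', b'')" "\<not> cross \<pi> (a', a'') (c', c'')" "\<not> cross \<pi> (b', b'') (c', c'')"
    "\<not> cross \<pi> (l, \<omega>) (a', a'')" "\<not> cross \<pi> (l, \<omega>) (c', c'')"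
    "\<not> cross \<pi> (l, \<alpha>) (a', a'')" "\<not> cross \<pi> (l, \<alpha>) (c', c'')"
    "\<not> cross \<pi> (\<alpha>, a') (\<omega>, b')" "\<not> cross \<pi> (\<alpha>, a') (\<omega>, c')" "\<not> cross \<pi> (\<alpha>, b') (\<omega>, c')"
    using nc A(3,4,11-16,20-22) by blast+
  have dd: "distinct [a', a'', b', b'']" "distinct [a', a'', c', c'']" "distinct [b', b'', c', c'']"
    "distinct [l, \<omega>, a', a'']" "distinct [l, \<omega>, c', c'']" "distinct [l, \<alpha>, a', a'']" "distinct [l, \<alpha>, c', c'']"
    "distinct [\<alpha>, a', \<omega>, b']" "distinct [\<alpha>, a', \<omega>, c']" "distinct [\<alpha>, b', \<omega>, c']"
    using A(10) by auto
  have R: "\<not> (\<pi> a' < \<pi> b' \<and> \<pi> b' < \<pi> a'' \<and> \<pi> a'' < \<pi> b'') \<and> \<not> (\<pi> b' < \<pi> a' \<and> \<pi> a' < \<pi> b'' \<and> \<pi> b'' < \<pi> a'')" using nc_iff[OF dd(1) R1(1)] .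
  note RR = nc_iff[OF dd(1) R1(1)] nc_iff[OF dd(2) R1(2)] nc_iff[OF dd(3) R1(3)] nc_iff[OF dd(4) R1(4)] nc_iff[OF dd(5) R1(5)] nc_iff[OF dd(6) R1(6)] nc_iff[OF dd(7) R1(7)] nc_iff[OF dd(8) R1(8)] nc_iff[OF dd(9) R1(9)] nc_iff[OF dd(10) R1(10)]
  have H: "\<pi> h < \<pi> a''" "\<pi> h < \<pi> b''" "\<pi> h < \<pi> c''" using A(23) by auto
  have mid: "(\<pi> a' < \<pi> b' \<and> \<pi> b' < \<pi> c') \<or> (\<pi> c' < \<pi> b' \<and> \<pi> b' < \<pi> a')"
  proof (rule ccontr)
    assume nm: "\<not> ?thesis"
    have c: "(\<pi> b' < \<pi> a' \<and> \<pi> b' < \<pi> c') \<or> (\<pi> a' < \<pi> b' \<and> \<pi> c' < \<pi> b')"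
      using nm D(1) D(3) by (auto simp: linorder_neq_iff)
    show False
    proof (cases "\<pi> \<alpha> < \<pi> \<omega>")
      case True
      show False
      proof (cases "\<pi> b' < \<pi> a'")
        case b1: True
        then have "\<pi> b' < \<pi> c'" using c by linarith
        then show False using True b1 RR(9) RR(10) T D(2) by linarith
      next
        case b2: False
        then have "\<pi> c' < \<pi> b'" "\<pi> a' < \<pi> b'" using c D(1,3) by linarith+
        then show False using True RR(8) RR(4) T H D(4) by linarith
      qed
    next
      case False
      then have ow: "\<pi> \<omega> < \<pi> \<alpha>" using D(6) by linarith
      show False
      proof (cases "\<pi> b' < \<pi> a'")
        case b1: True
        then have "\<pi> b' < \<pi> c'" using c by linarith
        then show False using ow b1 RR(8) RR(9) RR(10) T D(2) by linarith
      next
        case b2: False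
        then have "\<pi> c' < \<pi> b'" "\<pi> a' < \<pi> b'" using c D(1,3) by linarith+
        then show False using ow RR(10) RR(7) T H D(5) by linarith
      qed
    qed
  qed
  from mid show ?thesis
  proof
    assume m: "\<pi> a' < \<pi> b' \<and> \<pi> b' < \<pi> c'"
    have "\<pi> b'' < \<pi> a''" using m RR(1) T H D(7) by linarith
    moreover have "\<pi> c'' < \<pi> b''" using m RR(3) T H D(8) by linarith
    ultimately show ?thesis by simp
  next
    assume m: "\<pi> c' < \<pi> b' \<and> \<pi> b' < \<pi> a'"
    have "\<pi> a'' < \<pi> b''" using m RR(1) T H D(7) by linarith
    moreover have "\<pi> b'' < \<pi> c''" using m RR(3) T H D(8) by linarith
    ultimately show ?thesis by simp
  qed
qed

end
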